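(* Let $(I^*,\pi^* )\in\mathcal I_L\times\mathbb R$ be a Pareto optimal contract with $\rho^{Pol}(I^*,\pi^* )=\rho^{Pol}(0,0)$. Then there exists a pricing distortion function $g^*_{I^*}$ such that $(I^*,g^*_{I^*})$ is a Stackelberg equilibrium and $\Pi_{g^*_{I^*}}(I^*(X))=\pi^*$.
   Context: $(\Omega,\mathcal F,\mathbb P)$ is a non-atomic probability space; $X\ge0$ is bounded with range $[0,M]$ and strictly increasing distribution function $F_X$. A distortion function is a non-decreasing differentiable map $h:[0,1]\to[0,1]$ with $h(0)=0$, $h(1)=1$; $\int Y\,\mathrm dh\circ\mathbb P=\int_0^\infty h(\mathbb P(Y\ge y))\mathrm dy+\int_{-\infty}^0[h(\mathbb P(Y\ge y))-1]\mathrm dy$. Policyholder distortion $T$, $\rho^{Pol}(Z)=\int Z\,\mathrm dT\circ\mathbb P$; pricing distortion $g$, $\Pi_g(I(X))=\int I(X)\,\mathrm dg\circ\mathbb P$. $\mathcal I_L=\{I:[0,M]\to[0,M]: I(0)=0,\ 0\le I(x_1)-I(x_2)\le x_1-x_2\ \forall x_2\le x_1\}$; for a mechanism, $\rho^{Pol}(I,g)=\rho^{Pol}(X-I(X)+\Pi_g(I(X)))$ and $V^{In}(I,g)=\Pi_g(I(X))-\mathbb E[I(X)]$. $(I^*,g^* )$ is a Stackelberg equilibrium if (i) $I^*\in\arg\min_{I\in\mathcal I_L}\rho^{Pol}(I,g^* )$ and (ii) $V^{In}(I^*,g^* )\ge V^{In}(I,g)$ for all $(I,g)$ with $I\in\arg\min_{\bar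 I\in\mathcal I_L}\rho^{Pol}(\bar I,g)$. For a contract $(I,\pi)\in\mathcal I_L\times\mathbb R$: $\rho^{Pol}(I,\pi)=\rho^{Pol}(X-I(X)+\pi)$, $V^{In}(I,\pi)=\pi-\mathbb E[I(X)]$; it is Pareto optimal if no $(I',\pi')$ has $\rho^{Pol}(I',\pi')\le\rho^{Pol}(I,\pi)$ and $V^{In}(I',\pi')\ge V^{In}(I,\pi)$ with at least one strict inequality. *)

theory Defs
  imports "HOL-Probability.Probability"
begin

definition distortion :: "(real \<Rightarrow> real) \<Rightarrow> bool" where
  "distortion h \<longleftrightarrow> mono_on {0..1} h \<and> h ` {0..1} \<subseteq> {0..1}
     \<and> h differentiable_on {0..1} \<and> h 0 = 0 \<and> h 1 = 1"

definition choquet :: "'a measure \<Rightarrow> (real \<Rightarrow> real) \<Rightarrow> ('a \<Rightarrow> real) \<Rightarrow> real" where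
  "choquet M h Y =
     (LINT y:{0..}|lborel. h (measure M {\<omega> \<in> space M. y \<le> Y \<omega>}))
   + (LINT y:{..<0}|lborel. h (measure M {\<omega> \<in> space M. y \<le> Y \<omega>}) - 1)"

definition IL :: "real \<Rightarrow> (real \<Rightarrow> real) set" where
  "IL Mx = {I. (\<forall>x\<in>{0..Mx}. I x \<in> {0..Mx}) \<and> I 0 = 0 \<and>
     (\<forall>x1\<in>{0..Mx}. \<forall>x2\<in>{0..Mx}. x2 \<le> x1 \<longrightarrow> 0 \<le> I x1 - I x2 \<and> I x1 - I x2 \<le> x1 - x2)}"

definition premium :: "'a measure \<Rightarrow> ('a \<Rightarrow> real) \<Rightarrow> (real \<Rightarrow> real) \<Rightarrow> (real \<Rightarrow> real) \<Rightarrow> real" where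
  "premium M X g I = choquet M g (\<lambda>\<omega>. I (X \<omega>))"

definition rho_mech :: "'a measure \<Rightarrow> ('a \<Rightarrow> real) \<Rightarrow> (real \<Rightarrow> real) \<Rightarrow> (real \<Rightarrow> real) \<Rightarrow> (real \<Rightarrow> real) \<Rightarrow> real" where
  "rho_mech M X T I g = choquet M T (\<lambda>\<omega>. X \<omega> - I (X \<omega>) + premium M X g I)"

definition V_mech :: "'a measure \<Rightarrow> ('a \<Rightarrow> real) \<Rightarrow> (real \<Rightarrow> real) \<Rightarrow> (real \<Rightarrow> real) \<Rightarrow> real" where
  "V_mech M X I g = premium M X g I - (\<integral>\<omega>. I (X \<omega>) \<partial>M)"

definition rho_contract :: "'a measure \<Rightarrow> ('a \<Rightarrow> real) \<Rightarrow> (real \<Rightarrow> real) \<Rightarrow> (real \<Rightarrow> real) \<Rightarrow> real \<Rightarrow> real" where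
  "rho_contract M X T I \<pi> = choquet M T (\<lambda>\<omega>. X \<omega> - I (X \<omega>) + \<pi>)"

definition V_contract :: "'a measure \<Rightarrow> ('a \<Rightarrow> real) \<Rightarrow> (real \<Rightarrow> real) \<Rightarrow> real \<Rightarrow> real" where
  "V_contract M X I \<pi> = \<pi> - (\<integral>\<omega>. I (X \<omega>) \<partial>M)"

definition pareto_optimal :: "'a measure \<Rightarrow> ('a \<Rightarrow> real) \<Rightarrow> real \<Rightarrow> (real \<Rightarrow> real) \<Rightarrow> (real \<Rightarrow> real) \<Rightarrow> real \<Rightarrow> bool" where
  "pareto_optimal M X Mx T I \<pi> \<longleftrightarrow> I \<in> IL Mx \<and>
     \<not> (\<exists>I'\<in>IL Mx. \<exists>\<pi>'::real.
          rho_contract M X T I' \<pi>' \<le> rho_contract M X T I \<pi> \<and>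
          V_contract M X I' \<pi>' \<ge> V_contract M X I \<pi> \<and>
          (rho_contract M X T I' \<pi>' < rho_contract M X T I \<pi> \<or>
           V_contract M X I' \<pi>' > V_contract M X I \<pi>))"

definition best_response :: "'a measure \<Rightarrow> ('a \<Rightarrow> real) \<Rightarrow> real \<Rightarrow> (real \<Rightarrow> real) \<Rightarrow> (real \<Rightarrow> real) \<Rightarrow> (real \<Rightarrow> real) \<Rightarrow> bool" where
  "best_response M X Mx T g I \<longleftrightarrow> I \<in> IL Mx \<and>
     (\<forall>J\<in>IL Mx. rho_mech M X T I g \<le> rho_mech M X T J g)"

definition stackelberg :: "'a measure \<Rightarrow> ('a \<Rightarrow> real) \<Rightarrow> real \<Rightarrow> (real \<Rightarrow> real) \<Rightarrow> (real \<Rightarrow> real) \<Rightarrow> (real \<Rightarrow> real) \<Rightarrow> bool" where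
  "stackelberg M X Mx T I g \<longleftrightarrow> distortion g \<and> best_response M X Mx T g I \<and>
     (\<forall>I' g'. distortion g' \<longrightarrow> best_response M X Mx T g' I' \<longrightarrow>
        V_mech M X I g \<ge> V_mech M X I' g')"

definition nonatomic :: "'a measure \<Rightarrow> bool" where
  "nonatomic M \<longleftrightarrow> (\<forall>A\<in>sets M. measure M A > 0 \<longrightarrow>
     (\<exists>B\<in>sets M. B \<subseteq> A \<and> 0 < measure M B \<and> measure M B < measure M A))"

end

theory Submission
  imports Defs
begin

lemma layer_cake:
  fixes N :: "real measure" and f :: "real \<Rightarrow> real"
  assumes N: "prob_space N" and sN: "sets N = sets borel"
    and fb: "f \<in> borel_measurable borel" and K: "\<And>x. \<bar>f x\<bar> \<le> K"
  shows "integral\<^sup>L N f = (LINT y:{0..}|lborel. measure N {x. y \<le> f x})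
        + (LINT y:{..<0}|lborel. measure N {x. y \<le> f x} - 1)"
proof -
  interpret prob_space N by (rule N)
  interpret P: pair_sigma_finite N lborel
    by (simp add: lborel.sigma_finite_measure_axioms pair_sigma_finite_def sigma_finite_measure_axioms)
  have meq: "measurable N (borel::real measure) = measurable borel borel" by (rule measurable_cong_sets[OF sN refl])
  have f[measurable]: "f \<in> borel_measurable N" using fb meq by simp
  have sN'[measurable_cong]: "sets N = sets borel" by (rule sN)
  define H where "H x y = (if 0 \<le> y \<and> y \<le> f x then 1 else 0) - (if y < 0 \<and> f x < y then 1 else (0::real))" for x y
  have Hm[measurable]: "case_prod H \<in> borel_measurable (N \<Otimes>\<^sub>M lborel)"
    unfolding H_def by measurable
  have Kset: "UNIV \<times> {-K..K} \<in> sets (N \<Otimes>\<^sub>M lborel)"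
    using sN by (metis pair_measureI sets.top space_borel sets_lborel atLeastAtMost_borel sets_lborel)
  have Kfin: "emeasure (N \<Otimes>\<^sub>M lborel) (UNIV \<times> {-K..K}) < \<infinity>"
  proof -
    have sp: "space N = UNIV" using sets_eq_imp_space_eq[OF sN] by simp
    have "UNIV \<in> sets N" using sp sets.top by metis
    then have "emeasure (N \<Otimes>\<^sub>M lborel) (UNIV \<times> {-K..K}) = emeasure N UNIV * emeasure lborel {-K..K}"
      by (intro lborel.emeasure_pair_measure_Times) auto
    also have "\<dots> < \<infinity>" using emeasure_space_1 sp emeasure_bounded_finite[of "{-K..K}"]
      by (simp add: ennreal_mult_less_top)
    finally show ?thesis .
  qed
  have int: "integrable (N \<Otimes>\<^sub>M lborel) (case_prod H)"
  proof (rule Bochner_Integration.integrable_bound)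
    show "integrable (N \<Otimes>\<^sub>M lborel) (indicator (UNIV \<times> {-K..K}) :: _ \<Rightarrow> real)"
      using Kset Kfin by (rule integrable_real_indicator)
    show "AE p in N \<Otimes>\<^sub>M lborel. norm (case_prod H p) \<le> norm (indicator (UNIV \<times> {-K..K}) p :: real)"
    proof (intro AE_I2)
      fix p :: "real \<times> real"
      obtain x y where p: "p = (x, y)" by fastforce
      have "\<bar>H x y\<bar> \<le> indicator (UNIV \<times> {-K..K}) (x, y)"
        unfolding H_def indicator_def using K[of x] by (auto split: if_splits)
      then show "norm (case_prod H p) \<le> norm (indicator (UNIV \<times> {-K..K}) p :: real)"
        by (simp add: p indicator_def)
    qed
  qed (rule Hm)
  have inner: "(\<integral>y. H x y \<partial>lborel) = f x" for x
  proof -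
    have "(\<lambda>y. H x y) = (\<lambda>y. indicator {0..f x} y - indicator {f x<..<0} y)"
      by (auto simp: H_def indicator_def fun_eq_iff)
    then have "(\<integral>y. H x y \<partial>lborel) = measure lborel {0..f x} - measure lborel {f x<..<0}"
      by (simp add: integral_diff)
    then show ?thesis by (cases "0 \<le> f x") auto
  qed
  have outer: "(\<integral>x. H x y \<partial>N) = (if 0 \<le> y then measure N {x. y \<le> f x} else measure N {x. y \<le> f x} - 1)" for y
  proof (cases "0 \<le> y")
    case True
    then have "(\<lambda>x. H x y) = indicator {x. y \<le> f x}" by (auto simp: H_def indicator_def fun_eq_iff)
    moreover have "{x. y \<le> f x} \<in> sets N" by measurable
    ultimately show ?thesis using True by simp
  next
    case False
    then have "(\<lambda>x. H x y) = (\<lambda>x. indicator {x. y \<le> f x} x - 1)" by (auto simp: H_def indicator_def fun_eq_iff)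
    moreover have ms: "{x. y \<le> f x} \<in> sets N" by measurable
    moreover have "integrable N (indicator {x. y \<le> f x} :: real \<Rightarrow> real)"
      using ms by (intro integrable_real_indicator) (auto simp: less_top[symmetric])
    ultimately show ?thesis using False by (simp add: Bochner_Integration.integral_diff prob_space)
  qed
  define Q where "Q y = (\<integral>x. H x y \<partial>N)" for y
  have intQ: "integrable lborel Q" unfolding Q_def using P.integrable_snd[OF int] .
  have "integral\<^sup>L N f = (\<integral>x. (\<integral>y. H x y \<partial>lborel) \<partial>N)" by (simp add: inner)
  also have "\<dots> = (\<integral>y. Q y \<partial>lborel)" unfolding Q_def using P.Fubini_integral[OF int] by simp
  also have "\<dots> = (\<integral>y. indicator {0..} y *\<^sub>R Q y + indicator {..<0} y *\<^sub>R Q y \<partial>lborel)"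
    by (intro Bochner_Integration.integral_cong) (auto simp: indicator_def)
  also have "\<dots> = (\<integral>y. indicator {0..} y *\<^sub>R Q y \<partial>lborel) + (\<integral>y. indicator {..<0} y *\<^sub>R Q y \<partial>lborel)"
    using intQ by (intro Bochner_Integration.integral_add integrable_mult_indicator) auto
  also have "(\<integral>y. indicator {0..} y *\<^sub>R Q y \<partial>lborel) = (LINT y:{0..}|lborel. measure N {x. y \<le> f x})"
    unfolding set_lebesgue_integral_def
    by (intro Bochner_Integration.integral_cong) (auto simp: indicator_def Q_def outer)
  also have "(\<integral>y. indicator {..<0} y *\<^sub>R Q y \<partial>lborel) = (LINT y:{..<0}|lborel. measure N {x. y \<le> f x} - 1)"
    unfolding set_lebesgue_integral_def
    by (intro Bochner_Integration.integral_cong) (auto simp: indicator_def Q_def outer)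
  finally show ?thesis .
qed

definition clamp :: "real \<Rightarrow> real \<Rightarrow> real" where
  "clamp Mx x = max 0 (min Mx x)"

definition dnu :: "'a measure \<Rightarrow> ('a \<Rightarrow> real) \<Rightarrow> (real \<Rightarrow> real) \<Rightarrow> real measure" where
  "dnu M X h = interval_measure (\<lambda>a. 1 - h (measure M {\<omega> \<in> space M. a < X \<omega>}))"

lemma dnu_facts:
  assumes P: "prob_space M" and Xm: "X \<in> borel_measurable M"
    and Xb: "\<forall>\<omega>\<in>space M. 0 \<le> X \<omega> \<and> X \<omega> \<le> Mx" and h: "distortion h"
  shows "real_distribution (dnu M X h)"
    and "\<And>a. measure (dnu M X h) {..a} = 1 - h (measure M {\<omega> \<in> space M. a < X \<omega>})"
proof -
  interpret prob_space M by (rule P)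
  define S where "S a = measure M {\<omega> \<in> space M. a < X \<omega>}" for a
  define G where "G a = 1 - h (S a)" for a
  have hmono: "mono_on {0..1} h" and hcont: "continuous_on {0..1} h" and h0: "h 0 = 0" and h1: "h 1 = 1"
    using h unfolding distortion_def by (auto intro: differentiable_imp_continuous_on)
  have S01: "S a \<in> {0..1}" for a unfolding S_def by (simp add: measure_nonneg)
  have Sm: "{\<omega> \<in> space M. a < X \<omega>} \<in> sets M" for a using Xm by measurable
  have Santi: "S b \<le> S a" if "a \<le> b" for a b
    unfolding S_def using that by (intro finite_measure_mono) (auto simp: Sm)
  have nondec: "G a \<le> G b" if "a \<le> b" for a b
    unfolding G_def using hmono S01 Santi[OF that] by (auto simp: mono_on_def)
  interpret D: real_distribution "distr M borel X" using Xm by simp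
  have Scdf: "S a = 1 - cdf (distr M borel X) a" for a
  proof -
    have "cdf (distr M borel X) a = measure M {\<omega> \<in> space M. X \<omega> \<le> a}"
      unfolding cdf_def using Xm by (subst measure_distr) (auto simp: vimage_def Int_def conj_commute)
    moreover have "{\<omega> \<in> space M. a < X \<omega>} = space M - {\<omega> \<in> space M. X \<omega> \<le> a}" by auto
    moreover have "{\<omega> \<in> space M. X \<omega> \<le> a} \<in> sets M" using Xm by measurable
    ultimately show ?thesis unfolding S_def by (simp add: prob_compl)
  qed
  have rc: "continuous (at_right a) G" for a
  proof -
    have "((\<lambda>x. 1 - cdf (distr M borel X) x) \<longlongrightarrow> 1 - cdf (distr M borel X) a) (at_right a)"
      using D.cdf_is_right_cont[of a] unfolding continuous_within by (intro tendsto_intros)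
    moreover have "S = (\<lambda>x. 1 - cdf (distr M borel X) x)" using Scdf by (simp add: fun_eq_iff)
    ultimately have "(S \<longlongrightarrow> S a) (at_right a)" by simp
    then have "((\<lambda>x. h (S x)) \<longlongrightarrow> h (S a)) (at_right a)"
      using S01 by (intro continuous_on_tendsto_compose[OF hcont]) auto
    then show ?thesis unfolding continuous_within G_def by (intro tendsto_intros)
  qed
  have bot: "(G \<longlongrightarrow> 0) at_bot"
  proof (rule tendsto_eventually)
    have "G x = 0" if "x < 0" for x
    proof -
      have "{\<omega> \<in> space M. x < X \<omega>} = space M" using Xb that by force
      then show ?thesis by (simp add: G_def S_def h1 prob_space)
    qed
    then show "\<forall>\<^sub>F x in at_bot. G x = 0" by (auto simp: eventually_at_bot_dense)
  qed
  have top: "(G \<longlongrightarrow> 1) at_top"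
  proof (rule tendsto_eventually)
    have "G x = 1" if "x > Mx" for x
    proof -
      have "{\<omega> \<in> space M. x < X \<omega>} = {}" using Xb that by force
      then show ?thesis unfolding G_def S_def by (simp only:) (simp add: h0)
    qed
    then show "\<forall>\<^sub>F x in at_top. G x = 1" by (auto simp: eventually_at_top_dense)
  qed
  have eq: "dnu M X h = interval_measure G" unfolding dnu_def G_def S_def ..
  show "real_distribution (dnu M X h)" unfolding eq
    using nondec rc bot top by (rule real_distribution_interval_measure)
  show "measure (dnu M X h) {..a} = 1 - h (measure M {\<omega> \<in> space M. a < X \<omega>})" for a
    unfolding eq using measure_interval_measure_Iic[of G a, OF nondec rc bot] by (simp add: G_def S_def)
qed

lemma dnu_upper:
  assumes P: "prob_space M" and Xm: "X \<in> borel_measurable M"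
    and Xb: "\<forall>\<omega>\<in>space M. 0 \<le> X \<omega> \<and> X \<omega> \<le> Mx" and h: "distortion h"
    and U: "\<forall>x\<in>U. \<forall>y. x \<le> y \<longrightarrow> y \<in> U"
  shows "measure (dnu M X h) U = h (measure M {\<omega> \<in> space M. X \<omega> \<in> U})"
proof -
  interpret prob_space M by (rule P)
  interpret N: real_distribution "dnu M X h" using dnu_facts(1)[OF P Xm Xb h] .
  have hcont: "continuous_on {0..1} h" and h0: "h 0 = 0" and h1: "h 1 = 1"
    using h unfolding distortion_def by (auto intro: differentiable_imp_continuous_on)
  have gt: "measure (dnu M X h) {a<..} = h (measure M {\<omega> \<in> space M. a < X \<omega>})" for a
  proof -
    have "{a<..} = UNIV - {..a}" by auto
    then have "measure (dnu M X h) {a<..} = 1 - measure (dnu M X h) {..a}"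
      using N.prob_compl[of "{..a}"] by simp
    then show ?thesis using dnu_facts(2)[OF P Xm Xb h, of a] by simp
  qed
  have ge: "measure (dnu M X h) {a..} = h (measure M {\<omega> \<in> space M. a \<le> X \<omega>})" for a
  proof -
    define A where "A n = {a - inverse (real (Suc n)) <..}" for n
    define B where "B n = {\<omega> \<in> space M. a - inverse (real (Suc n)) < X \<omega>}" for n
    have inv_mono: "inverse (real (Suc n)) \<le> inverse (real (Suc m))" if "m \<le> n" for m n
      using that by (simp add: le_imp_inverse_le)
    have arch: "\<exists>n. x \<le> a - inverse (real (Suc n))" if "x < a" for x
    proof -
      have "0 < a - x" using that by simp
      then obtain n where "inverse (real (Suc n)) < a - x" using reals_Archimedean by blast
      then show ?thesis by (intro exI[of _ n]) simp
    qed
    have IA: "(\<Inter>n. A n) = {a..}"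
    proof (intro set_eqI iffI)
      fix x assume x: "x \<in> (\<Inter>n. A n)"
      show "x \<in> {a..}"
      proof (rule ccontr)
        assume "x \<notin> {a..}"
        then obtain n where "x \<le> a - inverse (real (Suc n))" using arch[of x] by auto
        moreover have "x \<in> A n" using x by blast
        ultimately show False unfolding A_def by simp
      qed
    next
      fix x assume "x \<in> {a..}"
      then show "x \<in> (\<Inter>n. A n)" unfolding A_def by (auto intro: less_le_trans[of _ a])
    qed
    have IB: "(\<Inter>n. B n) = {\<omega> \<in> space M. a \<le> X \<omega>}"
    proof (intro set_eqI iffI)
      fix x assume x: "x \<in> (\<Inter>n. B n)"
      show "x \<in> {\<omega> \<in> space M. a \<le> X \<omega>}"
      proof (rule ccontr)
        assume "x \<notin> {\<omega> \<in> space M. a \<le> X \<omega>}"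
        moreover have "x \<in> B 0" using x by blast
        ultimately obtain n where "X x \<le> a - inverse (real (Suc n))" using arch[of "X x"] unfolding B_def by auto
        moreover have "x \<in> B n" using x by blast
        ultimately show False unfolding B_def by simp
      qed
    next
      fix x assume "x \<in> {\<omega> \<in> space M. a \<le> X \<omega>}"
      then show "x \<in> (\<Inter>n. B n)" unfolding B_def by (auto intro: less_le_trans[of _ a])
    qed
    have "(\<lambda>n. measure (dnu M X h) (A n)) \<longlonglongrightarrow> measure (dnu M X h) (\<Inter>n. A n)"
      by (intro N.finite_Lim_measure_decseq) (auto simp: A_def decseq_def intro: inv_mono le_less_trans[rotated])
    then have L1: "(\<lambda>n. measure (dnu M X h) (A n)) \<longlonglongrightarrow> measure (dnu M X h) {a..}" by (simp add: IA)
    have "(\<lambda>n. measure M (B n)) \<longlonglongrightarrow> measure M (\<Inter>n. B n)"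
      using Xm by (intro finite_Lim_measure_decseq) (auto simp: B_def decseq_def intro: inv_mono le_less_trans[rotated])
    then have "(\<lambda>n. measure M (B n)) \<longlonglongrightarrow> measure M {\<omega> \<in> space M. a \<le> X \<omega>}" by (simp add: IB)
    then have L2: "(\<lambda>n. h (measure M (B n))) \<longlonglongrightarrow> h (measure M {\<omega> \<in> space M. a \<le> X \<omega>})"
      by (intro continuous_on_tendsto_compose[OF hcont]) auto
    have "measure (dnu M X h) (A n) = h (measure M (B n))" for n unfolding A_def B_def by (rule gt)
    then show ?thesis using LIMSEQ_unique[OF L1] L2 by simp
  qed
  show ?thesis
  proof (cases "U = {}")
    case True then show ?thesis by (simp add: h0)
  next
    case ne: False
    show ?thesis
    proof (cases "U = UNIV")
      case True
      have "measure (dnu M X h) UNIV = 1" using N.prob_space by simp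
      then show ?thesis using True by (simp add: h1 prob_space)
    next
      case False
      then obtain b where b: "b \<notin> U" by auto
      have bb: "b < u" if "u \<in> U" for u using U that b by (meson not_le)
      then have bdd: "bdd_below U" by (meson bdd_belowI less_imp_le)
      define a where "a = Inf U"
      have low: "a \<le> x" if "x \<in> U" for x unfolding a_def using that bdd by (rule cInf_lower)
      show ?thesis
      proof (cases "a \<in> U")
        case True
        then have "U = {a..}" using low U by auto
        then show ?thesis using ge[of a] by simp
      next
        case False
        have "U = {a<..}"
        proof (intro set_eqI iffI)
          fix x assume "x \<in> U" then show "x \<in> {a<..}" using low False by (cases "x = a") force+
        next
          fix x assume "x \<in> {a<..}"
          then have "Inf U < x" by (simp add: a_def)
          then obtain u where "u \<in> U" "u < x" using cInf_less_iff[OF ne bdd] by auto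
          then show "x \<in> U" using U by auto
        qed
        then show ?thesis using gt[of a] by simp
      qed
    qed
  qed
qed

lemma choquet_dnu:
  assumes P: "prob_space M" and Xm: "X \<in> borel_measurable M"
    and Xb: "\<forall>\<omega>\<in>space M. 0 \<le> X \<omega> \<and> X \<omega> \<le> Mx" and h: "distortion h"
    and Mx: "0 \<le> Mx" and phi: "mono_on {0..Mx} \<phi>"
  shows "choquet M h (\<lambda>\<omega>. \<phi> (X \<omega>)) = (\<integral>x. \<phi> (clamp Mx x) \<partial>dnu M X h)"
proof -
  interpret N: real_distribution "dnu M X h" using dnu_facts(1)[OF P Xm Xb h] .
  define f where "f x = \<phi> (clamp Mx x)" for x
  have cl: "clamp Mx x \<in> {0..Mx}" for x using Mx by (auto simp: clamp_def)
  have clm: "clamp Mx x \<le> clamp Mx y" if "x \<le> y" for x y using that by (auto simp: clamp_def)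
  have fmono: "mono f" unfolding f_def mono_def
    using phi cl clm by (auto simp: mono_on_def)
  have fb: "\<bar>f x\<bar> \<le> \<bar>\<phi> 0\<bar> + \<bar>\<phi> Mx\<bar>" for x
  proof -
    have "\<phi> 0 \<le> f x" "f x \<le> \<phi> Mx" unfolding f_def using phi cl[of x] Mx by (auto simp: mono_on_def)
    then show ?thesis by linarith
  qed
  have pw: "measure (dnu M X h) {x. y \<le> f x} = h (measure M {\<omega> \<in> space M. y \<le> \<phi> (X \<omega>)})" for y
  proof -
    have "measure (dnu M X h) {x. y \<le> f x} = h (measure M {\<omega> \<in> space M. X \<omega> \<in> {x. y \<le> f x}})"
      using fmono by (intro dnu_upper[OF P Xm Xb h]) (auto simp: mono_def intro: order_trans)
    also have "{\<omega> \<in> space M. X \<omega> \<in> {x. y \<le> f x}} = {\<omega> \<in> space M. y \<le> \<phi> (X \<omega>)}"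
      using Xb by (auto simp: f_def clamp_def)
    finally show ?thesis .
  qed
  have "(\<integral>x. f x \<partial>dnu M X h) = (LINT y:{0..}|lborel. measure (dnu M X h) {x. y \<le> f x})
        + (LINT y:{..<0}|lborel. measure (dnu M X h) {x. y \<le> f x} - 1)"
    using fb by (intro layer_cake N.prob_space_axioms N.events_eq_borel borel_measurable_mono fmono)
  then have "(\<integral>x. f x \<partial>dnu M X h) = choquet M h (\<lambda>\<omega>. \<phi> (X \<omega>))" unfolding pw choquet_def by simp
  then show ?thesis unfolding f_def by simp
qed

lemma IL_mono:
  assumes "J \<in> IL Mx"
  shows "mono_on {0..Mx} J" and "mono_on {0..Mx} (\<lambda>x. x - J x + c)"
proof -
  have *: "0 \<le> J s - J r \<and> J s - J r \<le> s - r" if "r \<in> {0..Mx}" "s \<in> {0..Mx}" "r \<le> s" for r s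
    using assms that unfolding IL_def by blast
  show "mono_on {0..Mx} J" unfolding mono_on_def using * by force
  show "mono_on {0..Mx} (\<lambda>x. x - J x + c)" unfolding mono_on_def using * by force
qed

theorem proposition3:
  fixes M :: "'a measure" and X :: "'a \<Rightarrow> real" and Mx :: real
    and T :: "real \<Rightarrow> real" and Istar :: "real \<Rightarrow> real" and \<pi>star :: real
  assumes "prob_space M"
    and "nonatomic M"
    and "X \<in> borel_measurable M"
    and "\<forall>\<omega>\<in>space M. 0 \<le> X \<omega> \<and> X \<omega> \<le> Mx"
    and "strict_mono_on {0..Mx} (\<lambda>x. measure M {\<omega> \<in> space M. X \<omega> \<le> x})"
    and "distortion T"
    and "Istar \<in> IL Mx"
    and "pareto_optimal M X Mx T Istar \<pi>star"
    and "rho_contract M X T Istar \<pi>star = rho_contract M X T (\<lambda>_. 0) 0"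
  shows "\<exists>g. distortion g \<and> stackelberg M X Mx T Istar g \<and> premium M X g Istar = \<pi>star"
proof -
  note P = assms(1) and Xm = assms(3) and Xb = assms(4) and hT = assms(6)
  interpret prob_space M by (rule P)
  have Mx: "0 \<le> Mx"
  proof -
    obtain \<omega> where "\<omega> \<in> space M" using not_empty by blast
    then show ?thesis using Xb by force
  qed
  interpret N: real_distribution "dnu M X T" using dnu_facts(1)[OF P Xm Xb hT] .
  define E where "E J = (\<integral>x. J (clamp Mx x) \<partial>dnu M X T)" for J :: "real \<Rightarrow> real"
  have cl: "clamp Mx x \<in> {0..Mx}" for x using Mx by (auto simp: clamp_def)
  have clm: "mono (clamp Mx)" by (auto simp: clamp_def mono_def)
  have intg: "integrable (dnu M X T) (\<lambda>x. J (clamp Mx x))" if "mono_on {0..Mx} J" for J :: "real \<Rightarrow> real"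
  proof (rule N.integrable_const_bound[where B="\<bar>J 0\<bar> + \<bar>J Mx\<bar>"])
    have "J 0 \<le> J (clamp Mx x)" "J (clamp Mx x) \<le> J Mx" for x
      using that cl[of x] Mx by (auto simp: mono_on_def)
    then show "AE x in dnu M X T. norm (J (clamp Mx x)) \<le> \<bar>J 0\<bar> + \<bar>J Mx\<bar>"
      by (intro AE_I2) (smt (verit) real_norm_def)
    have "mono (\<lambda>x. J (clamp Mx x))" using that cl clm by (auto simp: mono_def mono_on_def)
    moreover have "measurable (dnu M X T) (borel::real measure) = measurable borel borel"
      by (rule measurable_cong_sets[OF N.events_eq_borel refl])
    ultimately show "(\<lambda>x. J (clamp Mx x)) \<in> borel_measurable (dnu M X T)"
      using borel_measurable_mono by simp
  qed
  have NU1: "measure (dnu M X T) UNIV = 1" using N.prob_space by (simp add: dnu_def)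
  have idm: "mono_on {0..Mx} (\<lambda>x::real. x)" by (simp add: mono_on_def)
  have prem: "premium M X T J = E J" if "J \<in> IL Mx" for J
    unfolding premium_def E_def using choquet_dnu[OF P Xm Xb hT Mx IL_mono(1)[OF that]] .
  have rho_eq: "choquet M T (\<lambda>\<omega>. X \<omega> - J (X \<omega>) + c) = E (\<lambda>x. x) - E J + c" if J: "J \<in> IL Mx" for J c
  proof -
    have "choquet M T (\<lambda>\<omega>. X \<omega> - J (X \<omega>) + c) = (\<integral>x. clamp Mx x - J (clamp Mx x) + c \<partial>dnu M X T)"
      using choquet_dnu[OF P Xm Xb hT Mx IL_mono(2)[OF J, of c]] .
    also have "\<dots> = E (\<lambda>x. x) - E J + c"
      unfolding E_def using intg[OF idm] intg[OF IL_mono(1)[OF J]]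
      by (simp add: Bochner_Integration.integral_add Bochner_Integration.integral_diff NU1)
    finally show ?thesis .
  qed
  have IL0: "(\<lambda>_. 0) \<in> IL Mx" using Mx by (simp add: IL_def)
  have E0: "E (\<lambda>_. 0) = 0" by (simp add: E_def)
  have prem0: "premium M X g (\<lambda>_. 0) = 0" if "distortion g" for g
    unfolding premium_def using choquet_dnu[OF P Xm Xb that Mx, of "\<lambda>_. 0"] by (simp add: mono_on_def)
  have C: "premium M X T Istar = \<pi>star"
  proof -
    have "E (\<lambda>x. x) - E Istar + \<pi>star = E (\<lambda>x. x) - E (\<lambda>_. 0) + 0"
      using assms(9) rho_eq[OF assms(7), of \<pi>star] rho_eq[OF IL0, of 0] unfolding rho_contract_def by simp
    then show ?thesis using prem[OF assms(7)] E0 by simp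
  qed
  have rm: "rho_mech M X T J T = E (\<lambda>x. x)" if "J \<in> IL Mx" for J
    unfolding rho_mech_def using rho_eq[OF that] prem[OF that] by simp
  have BR: "best_response M X Mx T T Istar"
    unfolding best_response_def using assms(7) rm by simp
  have ST: "V_mech M X I' g' \<le> V_mech M X Istar T"
    if g': "distortion g'" and br: "best_response M X Mx T g' I'" for I' g'
  proof -
    have I': "I' \<in> IL Mx" and le: "rho_mech M X T I' g' \<le> rho_mech M X T (\<lambda>_. 0) g'"
      using br IL0 unfolding best_response_def by auto
    have "rho_mech M X T (\<lambda>_. 0) g' = rho_contract M X T Istar \<pi>star"
      using assms(9) prem0[OF g'] unfolding rho_mech_def rho_contract_def by simp
    moreover have "rho_mech M X T I' g' = rho_contract M X T I' (premium M X g' I')"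
      unfolding rho_mech_def rho_contract_def ..
    ultimately have le2: "rho_contract M X T I' (premium M X g' I') \<le> rho_contract M X T Istar \<pi>star"
      using le by simp
    have "\<not> V_contract M X I' (premium M X g' I') > V_contract M X Istar \<pi>star"
      using assms(8) I' le2 unfolding pareto_optimal_def by force
    then show ?thesis using C unfolding V_contract_def V_mech_def by simp
  qed
  have "stackelberg M X Mx T Istar T"
    unfolding stackelberg_def using hT BR ST by blast
  then show ?thesis using hT C by blast
qed

end
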